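(* Let $G$ be a group of order $n\ge 2$ and let $m\ge 3$ be an odd integer. Let $\Gamma$ be the digraph with vertex set $G\times G\times\mathbb{Z}_m$ in which $(x,y,i)\to(u,v,j)$ if and only if at least one of the following holds: (1) $x=u$, $i=j$ and $y\neq v$; (2) $y=v$, $i=j$ and $x\neq u$; (3) $u=xy$ and $j\in\{i+1,i+2,\dots,i+\tfrac{m-1}{2}\}$ (indices mod $m$); (4) $v=xy$ and $j\in\{i-\tfrac{m-1}{2},\dots,i-2,i-1\}$ (indices mod $m$). Then $\Gamma$ is a directed strongly regular graph with parameters $(v,k,t,\lambda,\mu)=(mn^2,\ mn+n-2,\ 2n+m-3,\ n+m-3,\ m+1)$.
   Context: A digraph here has no loops and no multiple arcs; its adjacency matrix $A$ (rows/columns indexed by the vertices) has $A_{xy}=1$ iff $x\to y$. A directed strongly regular graph with parameters $(v,k,t,\lambda,\mu)$ is a digraph on $v$ vertices whose adjacency matrix $A$ satisfies $A^2=tI+\lambda A+\mu(J-I-A)$ and $AJ=JA=kJ$, where $I$ is the identity and $J$ the all-ones matrix. Products $xy$ are taken in $G$. *)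

theory Defs
  imports "HOL-Algebra.Group"
begin

text \<open>A digraph on a finite vertex set V given by its arc relation adj (adj x y iff x -> y,
  i.e. A_xy = 1). Directed strongly regular graph: no loops, and the matrix identities
  A^2 = t I + lambda A + mu (J - I - A), AJ = JA = kJ, written out entrywise:
  (A^2)_xz is the number of w with x -> w -> z; (AJ)_x is the out-degree, (JA)_z the in-degree.\<close>

definition dsrg :: "'v set \<Rightarrow> ('v \<Rightarrow> 'v \<Rightarrow> bool) \<Rightarrow> nat \<Rightarrow> nat \<Rightarrow> nat \<Rightarrow> nat \<Rightarrow> nat \<Rightarrow> bool" where
  "dsrg V adj v k t lam mu \<longleftrightarrow>
     finite V \<and> card V = v \<and>
     (\<forall>x\<in>V. \<not> adj x x) \<and>
     (\<forall>x\<in>V. card {y\<in>V. adj x y} = k) \<and>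
     (\<forall>y\<in>V. card {x\<in>V. adj x y} = k) \<and>
     (\<forall>x\<in>V. \<forall>z\<in>V. card {w\<in>V. adj x w \<and> adj w z} =
         (if x = z then t else if adj x z then lam else mu))"

text \<open>The digraph of the theorem: vertices G x G x Z_m (Z_m represented by {0..<m}).\<close>

definition gamma_verts :: "('a, 'b) monoid_scheme \<Rightarrow> nat \<Rightarrow> ('a \<times> 'a \<times> nat) set" where
  "gamma_verts G m = carrier G \<times> carrier G \<times> {0..<m}"

definition gamma_adj :: "('a, 'b) monoid_scheme \<Rightarrow> nat \<Rightarrow> ('a \<times> 'a \<times> nat) \<Rightarrow> ('a \<times> 'a \<times> nat) \<Rightarrow> bool" where
  "gamma_adj G m p q = (case p of (x, y, i) \<Rightarrow> case q of (u, v, j) \<Rightarrow>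
      (x = u \<and> i = j \<and> y \<noteq> v) \<or>
      (y = v \<and> i = j \<and> x \<noteq> u) \<or>
      (u = x \<otimes>\<^bsub>G\<^esub> y \<and> (\<exists>d\<in>{1..(m - 1) div 2}. j = (i + d) mod m)) \<or>
      (v = x \<otimes>\<^bsub>G\<^esub> y \<and> (\<exists>d\<in>{1..(m - 1) div 2}. i = (j + d) mod m)))"

end

theory Submission
  imports Defs
begin

definition fw :: "nat \<Rightarrow> nat \<Rightarrow> nat \<Rightarrow> bool" where
  "fw m i j = (\<exists>d\<in>{1..(m - 1) div 2}. j = (i + d) mod m)"

definition rk :: "'a \<times> 'a \<Rightarrow> 'a \<times> 'a \<Rightarrow> bool" where
  "rk p q = ((fst p = fst q \<and> snd p \<noteq> snd q) \<or> (snd p = snd q \<and> fst p \<noteq> fst q))"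

lemma rk_sym: "rk p q = rk q p" by (auto simp: rk_def)

lemma fw_char:
  assumes "odd m" "i < m" "j < m"
  shows "fw m i j \<longleftrightarrow> (i < j \<and> j - i \<le> (m-1) div 2) \<or> (j < i \<and> i - j > (m-1) div 2)"
proof
  assume "fw m i j"
  then obtain d where d: "d \<in> {1..(m - 1) div 2}" "j = (i + d) mod m" by (auto simp: fw_def)
  show "(i < j \<and> j - i \<le> (m-1) div 2) \<or> (j < i \<and> i - j > (m-1) div 2)"
  proof (cases "i + d < m")
    case True
    then have "j = i + d" using d by simp
    then show ?thesis using d by auto
  next
    case False
    have "d < m" using d assms by auto
    have "(i + d) mod m = (i + d - m) mod m" using False by (simp add: le_mod_geq)
    also have "\<dots> = i + d - m" using \<open>d < m\<close> assms(2) by simp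
    finally have "j = i + d - m" using d by simp
    then show ?thesis using d False assms by auto
  qed
next
  assume h: "(i < j \<and> j - i \<le> (m-1) div 2) \<or> (j < i \<and> i - j > (m-1) div 2)"
  show "fw m i j"
  proof (cases "i < j")
    case True
    then show ?thesis using h assms unfolding fw_def by (intro bexI[of _ "j - i"]) auto
  next
    case False
    then have h2: "j < i" "i - j > (m-1) div 2" using h by auto
    have "(i + (m + j - i)) mod m = j" using h2 assms by simp
    moreover have "m + j - i \<in> {1..(m - 1) div 2}" using h2 assms by (auto elim!: oddE)
    ultimately show ?thesis unfolding fw_def by metis
  qed
qed

lemma fw_irrefl: "odd m \<Longrightarrow> i < m \<Longrightarrow> \<not> fw m i i"
  by (simp add: fw_char)

lemma fw_tri: "odd m \<Longrightarrow> i < m \<Longrightarrow> j < m \<Longrightarrow> i \<noteq> j \<Longrightarrow> fw m i j \<longleftrightarrow> \<not> fw m j i"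
  by (auto simp: fw_char elim!: oddE)

lemma adj_eq: "gamma_adj G m (x,y,i) (u,v,j) =
   (rk (x,y) (u,v) \<and> i = j \<or> u = x \<otimes>\<^bsub>G\<^esub> y \<and> fw m i j \<or> v = x \<otimes>\<^bsub>G\<^esub> y \<and> fw m j i)"
  by (auto simp: gamma_adj_def fw_def rk_def)

lemma card_layers:
  assumes "finite C" "finite L"
  shows "card {w \<in> C\<times>C\<times>L. P w} = (\<Sum>l\<in>L. card {ab \<in> C\<times>C. P (fst ab, snd ab, l)})"
proof -
  have "card {w \<in> C\<times>C\<times>L. P w} = card (SIGMA l:L. {ab \<in> C\<times>C. P (fst ab, snd ab, l)})"
    by (rule bij_betw_same_card[of "\<lambda>(a,b,l). (l,(a,b))"])
       (auto simp: bij_betw_def inj_on_def image_def)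
  also have "\<dots> = (\<Sum>l\<in>L. card {ab \<in> C\<times>C. P (fst ab, snd ab, l)})"
    by (rule card_SigmaI) (use assms in auto)
  finally show ?thesis .
qed


context group begin

lemma gaux1 [simp]: "x \<in> carrier G \<Longrightarrow> u \<in> carrier G \<Longrightarrow> x \<otimes> (inv x \<otimes> u) = u"
  by (simp add: m_assoc[symmetric])
lemma gaux2 [simp]: "c \<in> carrier G \<Longrightarrow> u \<in> carrier G \<Longrightarrow> u \<otimes> inv c \<otimes> c = u"
  by (simp add: m_assoc)
lemma gcl: "a \<in> carrier G \<Longrightarrow> b \<in> carrier G \<Longrightarrow> c \<in> carrier G \<Longrightarrow> (a \<otimes> b = a \<otimes> c) = (b = c)"
  by (metis Units_eq Units_l_cancel)
lemma gcr: "a \<in> carrier G \<Longrightarrow> b \<in> carrier G \<Longrightarrow> c \<in> carrier G \<Longrightarrow> (b \<otimes> a = c \<otimes> a) = (b = c)"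
  by (metis inv_solve_right' m_closed)
lemma rk_prod_ne: "rk (x,y) ab \<Longrightarrow> x \<in> carrier G \<Longrightarrow> y \<in> carrier G \<Longrightarrow> ab \<in> carrier G \<times> carrier G
   \<Longrightarrow> fst ab \<otimes> snd ab \<noteq> x \<otimes> y"
  by (cases ab) (auto simp: rk_def gcl gcr)

lemma cnt_rook:
  assumes "x \<in> carrier G" "y \<in> carrier G" "finite (carrier G)"
  shows "card {ab \<in> carrier G \<times> carrier G. rk (x,y) ab} = 2 * (card (carrier G) - 1)"
proof -
  let ?C = "carrier G"
  have e: "{ab \<in> ?C \<times> ?C. rk (x,y) ab} = ({x} \<times> (?C - {y})) \<union> ((?C - {x}) \<times> {y})"
    using assms by (auto simp: rk_def)
  have "card (({x} \<times> (?C - {y})) \<union> ((?C - {x}) \<times> {y})) = card ({x} \<times> (?C - {y})) + card ((?C - {x}) \<times> {y})"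
    by (rule card_Un_disjoint) (use assms in auto)
  also have "\<dots> = 2 * (card ?C - 1)" using assms by (simp add: card_cartesian_product)
  finally show ?thesis using e by simp
qed

lemma cnt_fst:
  assumes "c \<in> carrier G" "finite (carrier G)"
  shows "card {ab \<in> carrier G \<times> carrier G. fst ab = c} = card (carrier G)"
proof -
  have "{ab \<in> carrier G \<times> carrier G. fst ab = c} = {c} \<times> carrier G" using assms by auto
  then show ?thesis by (simp add: card_cartesian_product)
qed

lemma cnt_snd:
  assumes "c \<in> carrier G" "finite (carrier G)"
  shows "card {ab \<in> carrier G \<times> carrier G. snd ab = c} = card (carrier G)"
proof -
  have "{ab \<in> carrier G \<times> carrier G. snd ab = c} = carrier G \<times> {c}" using assms by auto
  then show ?thesis by (simp add: card_cartesian_product)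
qed

lemma cnt_prod:
  assumes "u \<in> carrier G" "finite (carrier G)"
  shows "card {ab \<in> carrier G \<times> carrier G. fst ab \<otimes> snd ab = u} = card (carrier G)"
proof -
  have "{ab \<in> carrier G \<times> carrier G. fst ab \<otimes> snd ab = u} = (\<lambda>a. (a, inv a \<otimes> u)) ` carrier G"
    using assms by (auto simp: inv_solve_left image_def)
  moreover have "inj_on (\<lambda>a. (a, inv a \<otimes> u)) (carrier G)" by (auto simp: inj_on_def)
  ultimately show ?thesis by (simp add: card_image)
qed

lemma cnt_fst_prod:
  assumes "u \<in> carrier G" "c \<in> carrier G"
  shows "card {ab \<in> carrier G \<times> carrier G. fst ab = c \<and> fst ab \<otimes> snd ab = u} = 1"
proof -
  have "{ab \<in> carrier G \<times> carrier G. fst ab = c \<and> fst ab \<otimes> snd ab = u} = {(c, inv c \<otimes> u)}"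
    using assms by (auto simp: inv_solve_left)
  then show ?thesis by simp
qed

lemma cnt_snd_prod:
  assumes "u \<in> carrier G" "c \<in> carrier G"
  shows "card {ab \<in> carrier G \<times> carrier G. snd ab = c \<and> fst ab \<otimes> snd ab = u} = 1"
proof -
  have "{ab \<in> carrier G \<times> carrier G. snd ab = c \<and> fst ab \<otimes> snd ab = u} = {(u \<otimes> inv c, c)}"
    using assms by (auto simp: inv_solve_right)
  then show ?thesis by simp
qed

lemma cnt_rook2:
  assumes "x \<in> carrier G" "y \<in> carrier G" "u \<in> carrier G" "v \<in> carrier G" "finite (carrier G)"
  shows "card {ab \<in> carrier G \<times> carrier G. rk (x,y) ab \<and> rk ab (u,v)} =
     (if (x,y) = (u,v) then 2 * (card (carrier G) - 1) else if rk (x,y) (u,v) then card (carrier G) - 2 else 2)"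
proof -
  let ?C = "carrier G"
  consider "(x,y) = (u,v)" | "x = u" "y \<noteq> v" | "y = v" "x \<noteq> u" | "x \<noteq> u" "y \<noteq> v" by auto
  then show ?thesis
  proof cases
    case 1
    then have "{ab \<in> ?C \<times> ?C. rk (x,y) ab \<and> rk ab (u,v)} = {ab \<in> ?C \<times> ?C. rk (x,y) ab}"
      using rk_sym by blast
    then show ?thesis using 1 cnt_rook assms by simp
  next
    case 2
    then have "{ab \<in> ?C \<times> ?C. rk (x,y) ab \<and> rk ab (u,v)} = {x} \<times> (?C - {y,v})"
      using assms by (auto simp: rk_def)
    moreover have "card (?C - {y,v}) = card ?C - 2" using 2 assms by (simp add: card_Diff_subset)
    ultimately show ?thesis using 2 by (simp add: card_cartesian_product rk_def)
  next
    case 3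
    then have "{ab \<in> ?C \<times> ?C. rk (x,y) ab \<and> rk ab (u,v)} = (?C - {x,u}) \<times> {y}"
      using assms by (auto simp: rk_def)
    moreover have "card (?C - {x,u}) = card ?C - 2" using 3 assms by (simp add: card_Diff_subset)
    ultimately show ?thesis using 3 by (simp add: card_cartesian_product rk_def)
  next
    case 4
    then have "{ab \<in> ?C \<times> ?C. rk (x,y) ab \<and> rk ab (u,v)} = {(x,v),(u,y)}"
      using assms by (auto simp: rk_def)
    then show ?thesis using 4 by (simp add: rk_def)
  qed
qed

lemma cnt_rook_prod:
  assumes "x \<in> carrier G" "y \<in> carrier G" "u \<in> carrier G"
  shows "card {ab \<in> carrier G \<times> carrier G. rk (x,y) ab \<and> fst ab \<otimes> snd ab = u} =
     (if u = x \<otimes> y then 0 else 2)"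
proof (cases "u = x \<otimes> y")
  case True
  then have e: "{ab \<in> carrier G \<times> carrier G. rk (x,y) ab \<and> fst ab \<otimes> snd ab = u} = {}"
    using assms rk_prod_ne by blast
  show ?thesis unfolding e using True by simp
next
  case False
  then have "{ab \<in> carrier G \<times> carrier G. rk (x,y) ab \<and> fst ab \<otimes> snd ab = u} = {(x, inv x \<otimes> u), (u \<otimes> inv y, y)}"
    using assms by (auto simp: rk_def inv_solve_left inv_solve_right inv_solve_left' inv_solve_right')
  moreover have "(x, inv x \<otimes> u) \<noteq> (u \<otimes> inv y, y)"
    using assms False by (auto simp: inv_solve_right)
  ultimately show ?thesis using False by simp
qed

lemma cnt_fst_rook:
  assumes "c \<in> carrier G" "u \<in> carrier G" "v \<in> carrier G" "finite (carrier G)"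
  shows "card {ab \<in> carrier G \<times> carrier G. fst ab = c \<and> rk ab (u,v)} =
     (if c = u then card (carrier G) - 1 else 1)"
proof (cases "c = u")
  case True
  then have "{ab \<in> carrier G \<times> carrier G. fst ab = c \<and> rk ab (u,v)} = {u} \<times> (carrier G - {v})"
    using assms by (auto simp: rk_def)
  then show ?thesis using True assms by (simp add: card_cartesian_product)
next
  case False
  then have "{ab \<in> carrier G \<times> carrier G. fst ab = c \<and> rk ab (u,v)} = {(c,v)}"
    using assms by (auto simp: rk_def)
  then show ?thesis using False by simp
qed

lemma cnt_snd_rook:
  assumes "c \<in> carrier G" "u \<in> carrier G" "v \<in> carrier G" "finite (carrier G)"
  shows "card {ab \<in> carrier G \<times> carrier G. snd ab = c \<and> rk ab (u,v)} =
     (if c = v then card (carrier G) - 1 else 1)"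
proof (cases "c = v")
  case True
  then have "{ab \<in> carrier G \<times> carrier G. snd ab = c \<and> rk ab (u,v)} = (carrier G - {u}) \<times> {v}"
    using assms by (auto simp: rk_def)
  then show ?thesis using True assms by (simp add: card_cartesian_product)
next
  case False
  then have "{ab \<in> carrier G \<times> carrier G. snd ab = c \<and> rk ab (u,v)} = {(u,c)}"
    using assms by (auto simp: rk_def)
  then show ?thesis using False by simp
qed

end


lemma sum1:
  assumes "finite A" "i \<in> A" "\<And>l. l \<in> A \<Longrightarrow> l \<noteq> i \<Longrightarrow> g l = c"
  shows "sum g A = g i + (card A - 1) * (c::nat)"
proof -
  have "sum g A = g i + sum g (A - {i})" using assms by (simp add: sum.remove)
  also have "sum g (A - {i}) = sum (\<lambda>_. c) (A - {i})" using assms by (intro sum.cong) auto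
  also have "\<dots> = (card A - 1) * c" using assms by simp
  finally show ?thesis .
qed

lemma sum2:
  assumes "finite A" "i \<in> A" "j \<in> A" "i \<noteq> j" "\<And>l. l \<in> A \<Longrightarrow> l \<noteq> i \<Longrightarrow> l \<noteq> j \<Longrightarrow> g l = 1"
  shows "sum g A = g i + g j + (card A - 2)"
proof -
  have "sum g A = g i + sum g (A - {i})" using assms by (simp add: sum.remove)
  also have "sum g (A - {i}) = g j + (card (A - {i}) - 1) * 1"
    by (rule sum1) (use assms in auto)
  also have "card (A - {i}) - 1 = card A - 2" using assms by simp
  finally show ?thesis by simp
qed

theorem mainTheorem1:
  fixes G :: "('a, 'b) monoid_scheme" and n m :: nat
  assumes "group G" and "finite (carrier G)" and "card (carrier G) = n" and "n \<ge> 2"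
    and "odd m" and "m \<ge> 3"
  shows "dsrg (gamma_verts G m) (gamma_adj G m)
           (m * n ^ 2) (m * n + n - 2) (2 * n + m - 3) (n + m - 3) (m + 1)"
proof -
  interpret group G by fact
  let ?C = "carrier G"
  let ?A = "gamma_adj G m"
  have finC: "finite ?C" by fact
  have finM: "finite {0..<m}" by simp
  have cn: "card ?C = n" by fact
  have V: "gamma_verts G m = ?C \<times> ?C \<times> {0..<m}" by (simp add: gamma_verts_def)
  have od: "odd m" by fact
  have irr: "\<And>i. i < m \<Longrightarrow> \<not> fw m i i" using od fw_irrefl by blast
  have tri: "\<And>i j. i < m \<Longrightarrow> j < m \<Longrightarrow> i \<noteq> j \<Longrightarrow> fw m i j \<longleftrightarrow> \<not> fw m j i"
    using od fw_tri by blast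
  have out: "card {w \<in> gamma_verts G m. ?A p w} = m * n + n - 2" if pV: "p \<in> gamma_verts G m" for p
  proof -
    obtain x y i where p: "p = (x,y,i)" "x \<in> ?C" "y \<in> ?C" "i < m" using pV V by auto
    have L: "card {w \<in> gamma_verts G m. ?A p w} =
       (\<Sum>l\<in>{0..<m}. card {ab \<in> ?C \<times> ?C. ?A p (fst ab, snd ab, l)})"
      unfolding V by (rule card_layers[OF finC finM])
    have lay: "card {ab \<in> ?C \<times> ?C. ?A p (fst ab, snd ab, l)} = (if l = i then 2 * (n - 1) else n)"
      if "l \<in> {0..<m}" for l
    proof -
      have l: "l < m" using that by simp
      consider "l = i" | "l \<noteq> i" "fw m i l" | "l \<noteq> i" "fw m l i" using tri[OF p(4) l] by blast
      then show ?thesis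
      proof cases
        case 1
        then have "{ab \<in> ?C \<times> ?C. ?A p (fst ab, snd ab, l)} = {ab \<in> ?C \<times> ?C. rk (x,y) ab}"
          using p irr by (auto simp: adj_eq)
        then show ?thesis using 1 cnt_rook p finC cn by simp
      next
        case 2
        then have "{ab \<in> ?C \<times> ?C. ?A p (fst ab, snd ab, l)} = {ab \<in> ?C \<times> ?C. fst ab = x \<otimes>\<^bsub>G\<^esub> y}"
          using p tri[OF p(4) l] by (auto simp: adj_eq)
        then show ?thesis using 2 cnt_fst p finC cn by simp
      next
        case 3
        then have "{ab \<in> ?C \<times> ?C. ?A p (fst ab, snd ab, l)} = {ab \<in> ?C \<times> ?C. snd ab = x \<otimes>\<^bsub>G\<^esub> y}"
          using p tri[OF p(4) l] by (auto simp: adj_eq)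
        then show ?thesis using 3 cnt_snd p finC cn by simp
      qed
    qed
    have "(\<Sum>l\<in>{0..<m}. card {ab \<in> ?C \<times> ?C. ?A p (fst ab, snd ab, l)}) = 2 * (n - 1) + (m - 1) * n"
      by (subst sum1[where i=i and c=n]) (use lay p in auto)
    also have "\<dots> = m * n + n - 2"
    proof -
      obtain m' where "m = m' + 1" using assms(6) by (metis add.commute le_add_diff_inverse le_trans one_le_numeral)
      then show ?thesis using assms(4) by (simp add: algebra_simps)
    qed
    finally show ?thesis using L by simp
  qed
  have inn: "card {w \<in> gamma_verts G m. ?A w z} = m * n + n - 2" if zV: "z \<in> gamma_verts G m" for z
  proof -
    obtain u v j where z: "z = (u,v,j)" "u \<in> ?C" "v \<in> ?C" "j < m" using zV V by auto
    have L: "card {w \<in> gamma_verts G m. ?A w z} =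
       (\<Sum>l\<in>{0..<m}. card {ab \<in> ?C \<times> ?C. ?A (fst ab, snd ab, l) z})"
      unfolding V by (rule card_layers[OF finC finM])
    have lay: "card {ab \<in> ?C \<times> ?C. ?A (fst ab, snd ab, l) z} = (if l = j then 2 * (n - 1) else n)"
      if "l \<in> {0..<m}" for l
    proof -
      have l: "l < m" using that by simp
      consider "l = j" | "l \<noteq> j" "fw m l j" | "l \<noteq> j" "fw m j l" using tri[OF z(4) l] by blast
      then show ?thesis
      proof cases
        case 1
        then have "{ab \<in> ?C \<times> ?C. ?A (fst ab, snd ab, l) z} = {ab \<in> ?C \<times> ?C. rk (u,v) ab}"
          using z irr by (auto simp: adj_eq rk_def)
        then show ?thesis using 1 cnt_rook z finC cn by simp
      next
        case 2
        then have "{ab \<in> ?C \<times> ?C. ?A (fst ab, snd ab, l) z} = {ab \<in> ?C \<times> ?C. fst ab \<otimes>\<^bsub>G\<^esub> snd ab = u}"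
          using z tri[OF z(4) l] by (auto simp: adj_eq)
        then show ?thesis using 2 cnt_prod z finC cn by simp
      next
        case 3
        then have "{ab \<in> ?C \<times> ?C. ?A (fst ab, snd ab, l) z} = {ab \<in> ?C \<times> ?C. fst ab \<otimes>\<^bsub>G\<^esub> snd ab = v}"
          using z tri[OF z(4) l] by (auto simp: adj_eq)
        then show ?thesis using 3 cnt_prod z finC cn by simp
      qed
    qed
    have "(\<Sum>l\<in>{0..<m}. card {ab \<in> ?C \<times> ?C. ?A (fst ab, snd ab, l) z}) = 2 * (n - 1) + (m - 1) * n"
      by (subst sum1[where i=j and c=n]) (use lay z in auto)
    also have "\<dots> = m * n + n - 2"
    proof -
      obtain m' where "m = m' + 1" using assms(6) by (metis add.commute le_add_diff_inverse le_trans one_le_numeral)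
      then show ?thesis using assms(4) by (simp add: algebra_simps)
    qed
    finally show ?thesis using L by simp
  qed
  have two: "card {w \<in> gamma_verts G m. ?A p w \<and> ?A w z} =
      (if p = z then 2 * n + m - 3 else if ?A p z then n + m - 3 else m + 1)"
    if pV: "p \<in> gamma_verts G m" and zV: "z \<in> gamma_verts G m" for p z
  proof -
    obtain x y i where p: "p = (x,y,i)" "x \<in> ?C" "y \<in> ?C" "i < m" using pV V by auto
    obtain u v j where z: "z = (u,v,j)" "u \<in> ?C" "v \<in> ?C" "j < m" using zV V by auto
    define g where "g l = card {ab \<in> ?C \<times> ?C. ?A p (fst ab, snd ab, l) \<and> ?A (fst ab, snd ab, l) z}" for l
    have L: "card {w \<in> gamma_verts G m. ?A p w \<and> ?A w z} = (\<Sum>l\<in>{0..<m}. g l)"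
      unfolding V g_def by (rule card_layers[OF finC finM])
    have xy: "x \<otimes>\<^bsub>G\<^esub> y \<in> ?C" using p by simp
    have mid: "g l = 1" if "l \<in> {0..<m}" "l \<noteq> i" "l \<noteq> j" for l
    proof -
      have l: "l < m" using that by simp
      have t1: "fw m i l \<longleftrightarrow> \<not> fw m l i" using tri[OF p(4) l] that by simp
      have t2: "fw m l j \<longleftrightarrow> \<not> fw m j l" using tri[OF l z(4)] that by simp
      consider "fw m i l" "fw m l j" | "fw m i l" "fw m j l" | "fw m l i" "fw m l j" | "fw m l i" "fw m j l"
        using t1 t2 by blast
      then show ?thesis
      proof cases
        case 1
        then have "{ab \<in> ?C \<times> ?C. ?A p (fst ab, snd ab, l) \<and> ?A (fst ab, snd ab, l) z} =
           {ab \<in> ?C \<times> ?C. fst ab = x \<otimes>\<^bsub>G\<^esub> y \<and> fst ab \<otimes>\<^bsub>G\<^esub> snd ab = u}"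
          using p z t1 t2 that by (auto simp: adj_eq)
        then show ?thesis unfolding g_def using cnt_fst_prod[OF z(2) xy] by simp
      next
        case 2
        then have "{ab \<in> ?C \<times> ?C. ?A p (fst ab, snd ab, l) \<and> ?A (fst ab, snd ab, l) z} =
           {ab \<in> ?C \<times> ?C. fst ab = x \<otimes>\<^bsub>G\<^esub> y \<and> fst ab \<otimes>\<^bsub>G\<^esub> snd ab = v}"
          using p z t1 t2 that by (auto simp: adj_eq)
        then show ?thesis unfolding g_def using cnt_fst_prod[OF z(3) xy] by simp
      next
        case 3
        then have "{ab \<in> ?C \<times> ?C. ?A p (fst ab, snd ab, l) \<and> ?A (fst ab, snd ab, l) z} =
           {ab \<in> ?C \<times> ?C. snd ab = x \<otimes>\<^bsub>G\<^esub> y \<and> fst ab \<otimes>\<^bsub>G\<^esub> snd ab = u}"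
          using p z t1 t2 that by (auto simp: adj_eq)
        then show ?thesis unfolding g_def using cnt_snd_prod[OF z(2) xy] by simp
      next
        case 4
        then have "{ab \<in> ?C \<times> ?C. ?A p (fst ab, snd ab, l) \<and> ?A (fst ab, snd ab, l) z} =
           {ab \<in> ?C \<times> ?C. snd ab = x \<otimes>\<^bsub>G\<^esub> y \<and> fst ab \<otimes>\<^bsub>G\<^esub> snd ab = v}"
          using p z t1 t2 that by (auto simp: adj_eq)
        then show ?thesis unfolding g_def using cnt_snd_prod[OF z(3) xy] by simp
      qed
    qed
    consider "i = j" | "i \<noteq> j" "fw m i j" | "i \<noteq> j" "fw m j i" using tri[OF p(4) z(4)] by blast
    then show ?thesis
    proof cases
      case 1
      have S: "(\<Sum>l\<in>{0..<m}. g l) = g i + (m - 1) * 1"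
        by (subst sum1[where i=i and c=1]) (use mid p 1 in auto)
      have "{ab \<in> ?C \<times> ?C. ?A p (fst ab, snd ab, i) \<and> ?A (fst ab, snd ab, i) z} =
           {ab \<in> ?C \<times> ?C. rk (x,y) ab \<and> rk ab (u,v)}"
        using p z irr 1 by (auto simp: adj_eq)
      then have gi: "g i = (if (x,y) = (u,v) then 2 * (n - 1) else if rk (x,y) (u,v) then n - 2 else 2)"
        unfolding g_def using cnt_rook2[OF p(2,3) z(2,3) finC] cn by simp
      have pz: "(p = z) = ((x,y) = (u,v))" using p z 1 by simp
      have az: "?A p z = rk (x,y) (u,v)" using p z 1 irr by (simp add: adj_eq)
      show ?thesis unfolding L S gi pz az using assms(4,6) by auto
    next
      case 2
      then have nf: "\<not> fw m j i" using tri[OF p(4) z(4)] by simp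
      have S: "(\<Sum>l\<in>{0..<m}. g l) = g i + g j + (m - 2)"
        by (subst sum2[where i=i and j=j]) (use mid p z 2 in auto)
      have "{ab \<in> ?C \<times> ?C. ?A p (fst ab, snd ab, i) \<and> ?A (fst ab, snd ab, i) z} =
           {ab \<in> ?C \<times> ?C. rk (x,y) ab \<and> fst ab \<otimes>\<^bsub>G\<^esub> snd ab = u}"
        using p z irr 2 nf by (auto simp: adj_eq)
      then have gi: "g i = (if u = x \<otimes>\<^bsub>G\<^esub> y then 0 else 2)"
        unfolding g_def using cnt_rook_prod[OF p(2,3) z(2)] by simp
      have "{ab \<in> ?C \<times> ?C. ?A p (fst ab, snd ab, j) \<and> ?A (fst ab, snd ab, j) z} =
           {ab \<in> ?C \<times> ?C. fst ab = x \<otimes>\<^bsub>G\<^esub> y \<and> rk ab (u,v)}"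
        using p z irr 2 nf by (auto simp: adj_eq)
      then have gj: "g j = (if x \<otimes>\<^bsub>G\<^esub> y = u then n - 1 else 1)"
        unfolding g_def using cnt_fst_rook[OF xy z(2,3) finC] cn by simp
      have pz: "p \<noteq> z" using p z 2 by simp
      have az: "?A p z = (u = x \<otimes>\<^bsub>G\<^esub> y)" using p z 2 nf by (simp add: adj_eq)
      show ?thesis unfolding L S gi gj az using pz assms(4,6) by auto
    next
      case 3
      then have nf: "\<not> fw m i j" using tri[OF p(4) z(4)] by simp
      have S: "(\<Sum>l\<in>{0..<m}. g l) = g i + g j + (m - 2)"
        by (subst sum2[where i=i and j=j]) (use mid p z 3 in auto)
      have "{ab \<in> ?C \<times> ?C. ?A p (fst ab, snd ab, i) \<and> ?A (fst ab, snd ab, i) z} =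
           {ab \<in> ?C \<times> ?C. rk (x,y) ab \<and> fst ab \<otimes>\<^bsub>G\<^esub> snd ab = v}"
        using p z irr 3 nf by (auto simp: adj_eq)
      then have gi: "g i = (if v = x \<otimes>\<^bsub>G\<^esub> y then 0 else 2)"
        unfolding g_def using cnt_rook_prod[OF p(2,3) z(3)] by simp
      have "{ab \<in> ?C \<times> ?C. ?A p (fst ab, snd ab, j) \<and> ?A (fst ab, snd ab, j) z} =
           {ab \<in> ?C \<times> ?C. snd ab = x \<otimes>\<^bsub>G\<^esub> y \<and> rk ab (u,v)}"
        using p z irr 3 nf by (auto simp: adj_eq)
      then have gj: "g j = (if x \<otimes>\<^bsub>G\<^esub> y = v then n - 1 else 1)"
        unfolding g_def using cnt_snd_rook[OF xy z(2,3) finC] cn by simp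
      have pz: "p \<noteq> z" using p z 3 by simp
      have az: "?A p z = (v = x \<otimes>\<^bsub>G\<^esub> y)" using p z 3 nf by (simp add: adj_eq)
      show ?thesis unfolding L S gi gj az using pz assms(4,6) by auto
    qed
  qed
  have loop: "\<not> ?A p p" if "p \<in> gamma_verts G m" for p
    using that V irr by (auto simp: adj_eq rk_def)
  have cardV: "card (gamma_verts G m) = m * n ^ 2"
    unfolding V using cn by (simp add: card_cartesian_product power2_eq_square)
  show ?thesis unfolding dsrg_def
    using out inn two loop cardV finC by (simp add: V)
qed

end
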